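(* Let $S$ be a semigroup and $a\in S$ an idempotent with $aSa\subseteq\operatorname{Reg}(S)$; let $P=\{x\in Sa: x\,\mathscr L\,ax\}$, let $H_a$ be the $\mathscr H$-class of $a$ in $S$ (which is the group of units of the monoid $aSa$), and let $\rho$ be the number of $\mathscr R^P$-classes contained in $\widehat R^a_a=\{x\in P: ax\ \mathscr R^{aSa}\ a\}$. Suppose $aSa\setminus H_a$ is an ideal of $aSa$. Then $$\operatorname{rank}(P)\ge \operatorname{rank}(aSa:H_a)+\max(\rho,\operatorname{rank}(H_a)),$$ with equality if $P$ is RI-dominated.
   Context: $P$ is a (regular) subsemigroup of $S$. $\mathscr R^P$, $\mathscr R^{aSa}$ denote Green's $\mathscr R$-relation in $P$ and in $aSa$. For a semigroup $T$, $\operatorname{rank}(T)$ is the minimum cardinality of a generating set, and for $A\subseteq T$, the relative rank $\operatorname{rank}(T:A)$ is the minimum cardinality of $U\subseteq T$ with $T=\langle A\cup U\rangle$. A semigroup $T$ is RI-dominated if for every $x\in T$ there is a right identity $e$ of $T$ (i.e. $ye=y$ for all $y\in T$) with $x\in eT^1$. *)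

theory Defs
  imports Main
begin

text \<open>Semigroup notions. The ambient semigroup S is the whole type 'a (class semigroup_mult);
  subsemigroups are subsets closed under multiplication.\<close>

inductive_set sgp_gen :: "'a::semigroup_mult set \<Rightarrow> 'a set" for U where
  base: "u \<in> U \<Longrightarrow> u \<in> sgp_gen U"
| mult: "x \<in> sgp_gen U \<Longrightarrow> y \<in> sgp_gen U \<Longrightarrow> x * y \<in> sgp_gen U"

definition subsemigroup :: "'a::semigroup_mult set \<Rightarrow> bool" where
  "subsemigroup T \<longleftrightarrow> (\<forall>x\<in>T. \<forall>y\<in>T. x * y \<in> T)"

definition rideal1 :: "'a::semigroup_mult set \<Rightarrow> 'a \<Rightarrow> 'a set" where
  "rideal1 T x = insert x {x * t | t. t \<in> T}"

definition lideal1 :: "'a::semigroup_mult set \<Rightarrow> 'a \<Rightarrow> 'a set" where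
  "lideal1 T x = insert x {t * x | t. t \<in> T}"

definition greenR :: "'a::semigroup_mult set \<Rightarrow> 'a \<Rightarrow> 'a \<Rightarrow> bool" where
  "greenR T x y \<longleftrightarrow> x \<in> T \<and> y \<in> T \<and> rideal1 T x = rideal1 T y"

definition greenL :: "'a::semigroup_mult set \<Rightarrow> 'a \<Rightarrow> 'a \<Rightarrow> bool" where
  "greenL T x y \<longleftrightarrow> x \<in> T \<and> y \<in> T \<and> lideal1 T x = lideal1 T y"

definition greenH :: "'a::semigroup_mult set \<Rightarrow> 'a \<Rightarrow> 'a \<Rightarrow> bool" where
  "greenH T x y \<longleftrightarrow> greenR T x y \<and> greenL T x y"

definition regular_elem :: "'a::semigroup_mult \<Rightarrow> bool" where
  "regular_elem x \<longleftrightarrow> (\<exists>y. x * y * x = x)"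

definition Reg :: "'a::semigroup_mult set" where
  "Reg = {x. regular_elem x}"

definition ideal_of :: "'a::semigroup_mult set \<Rightarrow> 'a set \<Rightarrow> bool" where
  "ideal_of T I \<longleftrightarrow> I \<subseteq> T \<and> (\<forall>x\<in>I. \<forall>t\<in>T. x * t \<in> I \<and> t * x \<in> I)"

definition srank :: "'a::semigroup_mult set \<Rightarrow> 'a rel" where
  "srank T = card_of (SOME U. U \<subseteq> T \<and> sgp_gen U = T \<and>
      (\<forall>V. V \<subseteq> T \<and> sgp_gen V = T \<longrightarrow> ordLeq3 (card_of U) (card_of V)))"

definition relrank :: "'a::semigroup_mult set \<Rightarrow> 'a set \<Rightarrow> 'a rel" where
  "relrank T A = card_of (SOME U. U \<subseteq> T \<and> sgp_gen (A \<union> U) = T \<and>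
      (\<forall>V. V \<subseteq> T \<and> sgp_gen (A \<union> V) = T \<longrightarrow> ordLeq3 (card_of U) (card_of V)))"

definition right_identity :: "'a::semigroup_mult set \<Rightarrow> 'a \<Rightarrow> bool" where
  "right_identity T e \<longleftrightarrow> e \<in> T \<and> (\<forall>y\<in>T. y * e = y)"

definition RI_dominated :: "'a::semigroup_mult set \<Rightarrow> bool" where
  "RI_dominated T \<longleftrightarrow> (\<forall>x\<in>T. \<exists>e. right_identity T e \<and> x \<in> rideal1 T e)"

text \<open>Cardinal comparisons with  x + max(y, z)  (cardinal sum and maximum).\<close>
definition csum_max_leq :: "'a rel \<Rightarrow> 'b rel \<Rightarrow> 'c rel \<Rightarrow> 'd rel \<Rightarrow> bool" where
  "csum_max_leq x y z d \<longleftrightarrow>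
     (if ordLeq3 y z then ordLeq3 (BNF_Cardinal_Arithmetic.csum x z) d
      else ordLeq3 (BNF_Cardinal_Arithmetic.csum x y) d)"

definition csum_max_iso :: "'a rel \<Rightarrow> 'b rel \<Rightarrow> 'c rel \<Rightarrow> 'd rel \<Rightarrow> bool" where
  "csum_max_iso x y z d \<longleftrightarrow>
     (if ordLeq3 y z then ordIso2 d (BNF_Cardinal_Arithmetic.csum x z)
      else ordIso2 d (BNF_Cardinal_Arithmetic.csum x y))"

definition aSa_of :: "'a::semigroup_mult \<Rightarrow> 'a set" where
  "aSa_of a = {a * s * a | s. True}"

definition P_of :: "'a::semigroup_mult \<Rightarrow> 'a set" where
  "P_of a = {x. (\<exists>s. x = s * a) \<and> greenL UNIV x (a * x)}"

definition H_of :: "'a::semigroup_mult \<Rightarrow> 'a set" where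
  "H_of a = {x. greenH UNIV x a}"

definition Rhat_of :: "'a::semigroup_mult \<Rightarrow> 'a set" where
  "Rhat_of a = {x \<in> P_of a. greenR (aSa_of a) (a * x) a}"

definition RP_classes_in_Rhat :: "'a::semigroup_mult \<Rightarrow> 'a set set" where
  "RP_classes_in_Rhat a =
     {C. (\<exists>x\<in>P_of a. C = {y. greenR (P_of a) x y}) \<and> C \<subseteq> Rhat_of a}"

end

theory Submission
  imports Defs
begin

lemma min_exists:
  fixes Q :: "'a set \<Rightarrow> bool"
  assumes "Q A0"
  shows "\<exists>U. Q U \<and> (\<forall>V. Q V \<longrightarrow> ordLeq3 (card_of U) (card_of V))"
proof -
  let ?R = "{card_of U | U. Q U}"
  have ne: "?R \<noteq> {}" using assms by blast
  have wo: "\<forall>r\<in>?R. Well_order r" using card_of_Well_order by blast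
  obtain r where r: "r \<in> ?R" "\<forall>r'\<in>?R. ordLeq3 r r'"
    using exists_minim_Well_order[OF ne wo] by blast
  obtain U where U: "Q U" "r = card_of U" using r(1) by blast
  show ?thesis
  proof (intro exI conjI allI impI)
    show "Q U" by (rule U(1))
  next
    fix V assume "Q V"
    then have "card_of V \<in> ?R" by blast
    then show "ordLeq3 (card_of U) (card_of V)" using r(2) U(2) by blast
  qed
qed

lemma gen_sub: assumes "U \<subseteq> T" "subsemigroup T" shows "sgp_gen U \<subseteq> T"
proof
  fix x assume "x \<in> sgp_gen U"
  then show "x \<in> T" using assms by (induction rule: sgp_gen.induct) (auto simp: subsemigroup_def)
qed

lemma gen_base: "U \<subseteq> sgp_gen U"
  using sgp_gen.base by blast

lemma gen_subsg: "subsemigroup (sgp_gen U)"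
  unfolding subsemigroup_def using sgp_gen.mult by blast

lemma gen_self: "subsemigroup T \<Longrightarrow> sgp_gen T = T"
  using gen_sub gen_base by blast

lemma gen_empty: "sgp_gen {} = {}"
  using gen_sub[of "{}" "{}"] by (auto simp: subsemigroup_def)

lemma rideal_trans:
  "subsemigroup T \<Longrightarrow> x \<in> rideal1 T y \<Longrightarrow> y \<in> rideal1 T z \<Longrightarrow> x \<in> rideal1 T z"
  unfolding rideal1_def subsemigroup_def by (auto simp: mult.assoc) (metis mult.assoc)?

lemma rideal_self: "x \<in> rideal1 T x" unfolding rideal1_def by auto

lemma rideal_eq:
  assumes "subsemigroup T"
  shows "rideal1 T x = rideal1 T y \<longleftrightarrow> x \<in> rideal1 T y \<and> y \<in> rideal1 T x"
  using rideal_trans[OF assms] rideal_self by blast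

lemma lideal_trans:
  "subsemigroup T \<Longrightarrow> x \<in> lideal1 T y \<Longrightarrow> y \<in> lideal1 T z \<Longrightarrow> x \<in> lideal1 T z"
  unfolding lideal1_def subsemigroup_def by (auto simp: mult.assoc) (metis mult.assoc)?

lemma lideal_self: "x \<in> lideal1 T x" unfolding lideal1_def by auto

lemma lideal_eq:
  assumes "subsemigroup T"
  shows "lideal1 T x = lideal1 T y \<longleftrightarrow> x \<in> lideal1 T y \<and> y \<in> lideal1 T x"
  using lideal_trans[OF assms] lideal_self by blast

lemma UNIV_sg: "subsemigroup UNIV" unfolding subsemigroup_def by auto

context
  fixes a :: "'a::semigroup_mult"
  assumes idem: "a * a = a"
begin

lemma idem2: "a * (a * x) = a * x" using idem by (metis mult.assoc)

lemma W_iff: "w \<in> aSa_of a \<longleftrightarrow> a * w * a = w"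
proof
  assume "w \<in> aSa_of a" then obtain s where "w = a*s*a" unfolding aSa_of_def by blast
  then show "a*w*a = w" using idem by (metis mult.assoc)
next
  assume h: "a*w*a = w" then show "w \<in> aSa_of a" using h[symmetric] unfolding aSa_of_def by blast
qed

lemma a_W: "a \<in> aSa_of a" using W_iff idem by simp

lemma W_la: "w \<in> aSa_of a \<Longrightarrow> a * w = w"
  using W_iff idem by (metis mult.assoc)

lemma W_ra: "w \<in> aSa_of a \<Longrightarrow> w * a = w"
  using W_iff idem by (metis mult.assoc)

lemma W_mult: "x \<in> aSa_of a \<Longrightarrow> y \<in> aSa_of a \<Longrightarrow> x * y \<in> aSa_of a"
  using W_iff W_la W_ra by (metis mult.assoc)

lemma W_sg: "subsemigroup (aSa_of a)"
  unfolding subsemigroup_def using W_mult by blast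

lemma P_iff: "x \<in> P_of a \<longleftrightarrow> x * a = x \<and> (\<exists>t. x = t * (a * x))"
proof -
  have 1: "a*x \<in> lideal1 UNIV x" unfolding lideal1_def by blast
  have "greenL UNIV x (a*x) \<longleftrightarrow> x \<in> lideal1 UNIV (a*x)"
    unfolding greenL_def using lideal_eq[OF UNIV_sg] 1 by blast
  also have "\<dots> \<longleftrightarrow> (\<exists>t. x = t * (a * x))"
  proof
    assume "x \<in> lideal1 UNIV (a*x)"
    then have "x = a*x \<or> (\<exists>t. x = t * (a * x))" unfolding lideal1_def by blast
    then show "\<exists>t. x = t * (a * x)" using idem2 by metis
  qed (auto simp: lideal1_def)
  finally have e1: "greenL UNIV x (a*x) \<longleftrightarrow> (\<exists>t. x = t * (a * x))" .
  have e2: "(\<exists>s. x = s * a) \<longleftrightarrow> x * a = x" using idem by (metis mult.assoc)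
  show ?thesis unfolding P_of_def using e1 e2 by blast
qed

lemma P_ra: "x \<in> P_of a \<Longrightarrow> x * a = x" using P_iff by blast

lemma P_mult: "x \<in> P_of a \<Longrightarrow> y \<in> P_of a \<Longrightarrow> x * y \<in> P_of a"
  unfolding P_iff by (metis mult.assoc)

lemma P_sg: "subsemigroup (P_of a)"
  unfolding subsemigroup_def using P_mult by blast

lemma W_P: "aSa_of a \<subseteq> P_of a"
proof
  fix w assume w: "w \<in> aSa_of a"
  have "w = a * (a * w)" using W_la[OF w] idem2 by simp
  then show "w \<in> P_of a" unfolding P_iff using W_ra[OF w] by blast
qed

lemma phi_W: "x \<in> P_of a \<Longrightarrow> a * x \<in> aSa_of a"
  unfolding W_iff using P_ra idem by (metis mult.assoc)

lemma phi_hom: "x \<in> P_of a \<Longrightarrow> a * (x * y) = (a * x) * (a * y)"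
  using P_ra by (metis mult.assoc)

lemma H_iff: "x \<in> H_of a \<longleftrightarrow> x \<in> aSa_of a \<and> (\<exists>y\<in>aSa_of a. x * y = a \<and> y * x = a)"
proof
  assume "x \<in> H_of a"
  then have R: "rideal1 UNIV x = rideal1 UNIV a" and L: "lideal1 UNIV x = lideal1 UNIV a"
    unfolding H_of_def greenH_def greenR_def greenL_def by auto
  have "x \<in> rideal1 UNIV a" using R rideal_self by metis
  then have "x = a \<or> (\<exists>t. x = a * t)" unfolding rideal1_def by blast
  then obtain t where t: "x = a * t" using idem by metis
  have "a \<in> rideal1 UNIV x" using R rideal_self by metis
  then have "a = x \<or> (\<exists>s. a = x * s)" unfolding rideal1_def by blast
  then obtain s where s: "a = x * s" using idem by metis
  have "x \<in> lideal1 UNIV a" using L lideal_self by metis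
  then have "x = a \<or> (\<exists>t. x = t * a)" unfolding lideal1_def by blast
  then obtain t' where t': "x = t' * a" using idem by metis
  have "a \<in> lideal1 UNIV x" using L lideal_self by metis
  then have "a = x \<or> (\<exists>s. a = s * x)" unfolding lideal1_def by blast
  then obtain s' where s': "a = s' * x" using idem by metis
  have xa: "x * a = x" using t' idem by (simp add: mult.assoc)
  have ax: "a * x = x" using t idem2 by simp
  have xW: "x \<in> aSa_of a" unfolding W_iff by (simp add: xa ax)
  define y where "y = a * s * a"
  have yW: "y \<in> aSa_of a" unfolding W_iff y_def by (simp add: mult.assoc idem idem2)
  have "x * y = (x*a)*s*a" by (simp add: y_def mult.assoc)
  also have "\<dots> = (x*s)*a" using xa by simp
  also have "\<dots> = a" using s[symmetric] idem by simp
  finally have xy: "x * y = a" .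
  have "y * x = a"
  proof -
    have "y = a * y" using W_la yW by simp
    also have "\<dots> = s' * (x * y)" using s' by (simp add: mult.assoc)
    also have "\<dots> = s' * a" using xy by simp
    finally have ys: "y = s' * a" .
    show ?thesis using ys ax s'[symmetric] by (simp add: mult.assoc)
  qed
  then show "x \<in> aSa_of a \<and> (\<exists>y\<in>aSa_of a. x * y = a \<and> y * x = a)" using xW yW xy by blast
next
  assume "x \<in> aSa_of a \<and> (\<exists>y\<in>aSa_of a. x * y = a \<and> y * x = a)"
  then obtain y where xW: "x \<in> aSa_of a" and yW: "y \<in> aSa_of a" and xy: "x * y = a" and yx: "y * x = a"
    by blast
  have "rideal1 UNIV x = rideal1 UNIV a"
    unfolding rideal_eq[OF UNIV_sg] unfolding rideal1_def using W_la[OF xW, symmetric] xy[symmetric] by blast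
  moreover have "lideal1 UNIV x = lideal1 UNIV a"
    unfolding lideal_eq[OF UNIV_sg] unfolding lideal1_def using W_ra[OF xW, symmetric] yx[symmetric] by blast
  ultimately show "x \<in> H_of a" unfolding H_of_def greenH_def greenR_def greenL_def by auto
qed

lemma a_H: "a \<in> H_of a" using H_iff a_W idem by blast

lemma H_W: "H_of a \<subseteq> aSa_of a" using H_iff by blast

lemma H_P: "H_of a \<subseteq> P_of a" using H_W W_P by blast

lemma H_inv: "x \<in> H_of a \<Longrightarrow> \<exists>y\<in>H_of a. x * y = a \<and> y * x = a"
  using H_iff by blast

end

context
  fixes a :: "'a::semigroup_mult"
  assumes idem: "a * a = a"
    and ideal: "ideal_of (aSa_of a) (aSa_of a - H_of a)"
begin

lemma unitR: "w \<in> aSa_of a \<Longrightarrow> w' \<in> aSa_of a \<Longrightarrow> w * w' = a \<Longrightarrow> w \<in> H_of a"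
  using ideal a_H[OF idem] unfolding ideal_of_def by blast

lemma unitL: "w \<in> aSa_of a \<Longrightarrow> w' \<in> aSa_of a \<Longrightarrow> w' * w = a \<Longrightarrow> w \<in> H_of a"
  using ideal a_H[OF idem] unfolding ideal_of_def by blast

lemma H_mult: "x \<in> H_of a \<Longrightarrow> y \<in> H_of a \<Longrightarrow> x * y \<in> H_of a"
proof -
  assume x: "x \<in> H_of a" and y: "y \<in> H_of a"
  obtain x' where x': "x' \<in> H_of a" "x * x' = a" using H_inv[OF idem x] by blast
  obtain y' where y': "y' \<in> H_of a" "y * y' = a" using H_inv[OF idem y] by blast
  have xa: "x * a = x" using W_ra[OF idem] H_W[OF idem] x by blast
  have "(x * y) * (y' * x') = x * (y * y') * x'" by (simp add: mult.assoc)
  also have "\<dots> = x * x'" using y' xa by simp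
  also have "\<dots> = a" using x' by simp
  finally have "(x * y) * (y' * x') = a" .
  moreover have "x * y \<in> aSa_of a" using W_mult[OF idem] H_W[OF idem] x y by blast
  moreover have "y' * x' \<in> aSa_of a" using W_mult[OF idem] H_W[OF idem] x' y' by blast
  ultimately show ?thesis using unitR by blast
qed

lemma H_sg: "subsemigroup (H_of a)" unfolding subsemigroup_def using H_mult by blast

lemma Rhat_iff: "x \<in> Rhat_of a \<longleftrightarrow> x \<in> P_of a \<and> a * x \<in> H_of a"
proof -
  have "x \<in> P_of a \<Longrightarrow> greenR (aSa_of a) (a * x) a \<longleftrightarrow> a * x \<in> H_of a"
  proof -
    assume xP: "x \<in> P_of a"
    have axW: "a * x \<in> aSa_of a" using phi_W[OF idem xP] .
    show ?thesis
    proof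
      assume "greenR (aSa_of a) (a * x) a"
      then have "a \<in> rideal1 (aSa_of a) (a * x)" unfolding greenR_def using rideal_self by metis
      then show "a * x \<in> H_of a" unfolding rideal1_def
        using a_H[OF idem] unitR axW by auto
    next
      assume h: "a * x \<in> H_of a"
      then obtain g where g: "g \<in> H_of a" "(a * x) * g = a" using H_inv[OF idem] by blast
      have "a = a * x * g" "g \<in> aSa_of a" using g H_W[OF idem] by auto
      then have "a \<in> rideal1 (aSa_of a) (a * x)" unfolding rideal1_def by blast
      moreover have "a * x \<in> rideal1 (aSa_of a) a" unfolding rideal1_def using axW W_la[OF idem axW, symmetric] by blast
      ultimately show "greenR (aSa_of a) (a * x) a"
        unfolding greenR_def using rideal_eq[OF W_sg[OF idem]] axW a_W[OF idem] by blast
    qed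
  qed
  then show ?thesis unfolding Rhat_of_def by blast
qed

lemma Rhat_mult: "x \<in> Rhat_of a \<Longrightarrow> y \<in> Rhat_of a \<Longrightarrow> x * y \<in> Rhat_of a"
  unfolding Rhat_iff using P_mult[OF idem] phi_hom[OF idem] H_mult by metis

lemma Rhat_sg: "subsemigroup (Rhat_of a)" unfolding subsemigroup_def using Rhat_mult by blast

lemma greenR_P_iff: "greenR (P_of a) x y \<longleftrightarrow> x \<in> P_of a \<and> y \<in> P_of a \<and> x \<in> rideal1 (P_of a) y \<and> y \<in> rideal1 (P_of a) x"
  unfolding greenR_def using rideal_eq[OF P_sg[OF idem]] by blast

lemma R_mult: "x \<in> P_of a \<Longrightarrow> y \<in> Rhat_of a \<Longrightarrow> greenR (P_of a) x (x * y)"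
proof -
  assume x: "x \<in> P_of a" and y: "y \<in> Rhat_of a"
  then have yP: "y \<in> P_of a" and ay: "a * y \<in> H_of a" using Rhat_iff by auto
  obtain g where g: "g \<in> H_of a" "(a * y) * g = a" using H_inv[OF idem ay] by blast
  have "x * y * g = x" using g P_ra[OF idem x] by (metis mult.assoc)
  then have "x \<in> rideal1 (P_of a) (x * y)" unfolding rideal1_def using g H_P[OF idem] by force
  moreover have "x * y \<in> rideal1 (P_of a) x" unfolding rideal1_def using yP by blast
  ultimately show ?thesis unfolding greenR_P_iff using x yP P_mult[OF idem] by blast
qed

lemma class_sub: "x \<in> Rhat_of a \<Longrightarrow> {y. greenR (P_of a) x y} \<subseteq> Rhat_of a"
proof
  fix y assume x: "x \<in> Rhat_of a" and "y \<in> {y. greenR (P_of a) x y}"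
  then have yP: "y \<in> P_of a" and xy: "x \<in> rideal1 (P_of a) y" unfolding greenR_P_iff by auto
  have axH: "a * x \<in> H_of a" using x Rhat_iff by blast
  have "a * y \<in> H_of a"
  proof (cases "x = y")
    case True then show ?thesis using axH by simp
  next
    case False
    then obtain q where q: "q \<in> P_of a" "x = y * q" using xy unfolding rideal1_def by blast
    have e: "a * x = (a * y) * (a * q)" using q(2) phi_hom[OF idem yP] by simp
    obtain g where g: "g \<in> H_of a" "(a * x) * g = a" using H_inv[OF idem axH] by blast
    have "(a * y) * ((a * q) * g) = a" using g(2) unfolding e by (simp add: mult.assoc)
    moreover have "(a * q) * g \<in> aSa_of a"
      using W_mult[OF idem] phi_W[OF idem q(1)] g H_W[OF idem] by blast
    ultimately show "a * y \<in> H_of a" using unitR phi_W[OF idem yP] by blast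
  qed
  then show "y \<in> Rhat_of a" using Rhat_iff yP by blast
qed

lemma class_has_E:
  assumes "C \<in> RP_classes_in_Rhat a"
  shows "\<exists>e\<in>C. a * e = a"
proof -
  obtain x where x: "x \<in> P_of a" and C: "C = {y. greenR (P_of a) x y}" and sub: "C \<subseteq> Rhat_of a"
    using assms unfolding RP_classes_in_Rhat_def by blast
  have "x \<in> C" using C x unfolding greenR_def by auto
  then have xR: "x \<in> Rhat_of a" using sub by blast
  then obtain g where g: "g \<in> H_of a" "(a * x) * g = a" "g * (a * x) = a"
    using H_inv[OF idem] Rhat_iff by blast
  define e where "e = x * g"
  have eP: "e \<in> P_of a" unfolding e_def using P_mult[OF idem] x g H_P[OF idem] by blast
  have ae: "a * e = a" unfolding e_def using g by (metis mult.assoc)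
  have "x = e * (a * x)" unfolding e_def using g P_ra[OF idem x] by (metis mult.assoc)
  then have "x \<in> rideal1 (P_of a) e" unfolding rideal1_def using phi_W[OF idem x] W_P[OF idem] by blast
  moreover have "e \<in> rideal1 (P_of a) x" unfolding rideal1_def e_def using g H_P[OF idem] by blast
  ultimately have "e \<in> C" using C eP x greenR_P_iff by blast
  then show ?thesis using ae by blast
qed

lemma phi_gen: "U \<subseteq> P_of a \<Longrightarrow> x \<in> sgp_gen U \<Longrightarrow>
    a * x \<in> sgp_gen (H_of a \<union> (\<lambda>u. a * u) ` (U - Rhat_of a))"
proof -
  assume U: "U \<subseteq> P_of a" and x: "x \<in> sgp_gen U"
  from x show ?thesis
  proof (induction rule: sgp_gen.induct)
    case (base u)
    then show ?case using Rhat_iff sgp_gen.base by (metis Diff_iff Un_iff image_eqI subsetD)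
  next
    case (mult x y)
    have "x \<in> P_of a" using gen_sub[OF U P_sg[OF idem]] mult by blast
    then show ?case using phi_hom[OF idem] mult sgp_gen.mult by metis
  qed
qed

lemma phi_gen2: "V \<subseteq> P_of a \<Longrightarrow> x \<in> sgp_gen V \<Longrightarrow> a * x \<in> sgp_gen ((\<lambda>u. a * u) ` V)"
proof -
  assume U: "V \<subseteq> P_of a" and x: "x \<in> sgp_gen V"
  from x show ?thesis
  proof (induction rule: sgp_gen.induct)
    case (base u)
    then show ?case using sgp_gen.base by blast
  next
    case (mult x y)
    have "x \<in> P_of a" using gen_sub[OF U P_sg[OF idem]] mult by blast
    then show ?case using phi_hom[OF idem] mult sgp_gen.mult by metis
  qed
qed

lemma gen_U2: "U \<subseteq> P_of a \<Longrightarrow> x \<in> sgp_gen U \<Longrightarrow> a * x \<in> H_of a \<Longrightarrow> x \<in> sgp_gen (U \<inter> Rhat_of a)"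
proof -
  assume U: "U \<subseteq> P_of a" and x: "x \<in> sgp_gen U"
  from x show "a * x \<in> H_of a \<Longrightarrow> x \<in> sgp_gen (U \<inter> Rhat_of a)"
  proof (induction rule: sgp_gen.induct)
    case (base u)
    then show ?case using Rhat_iff sgp_gen.base U by blast
  next
    case (mult x y)
    have xP: "x \<in> P_of a" and yP: "y \<in> P_of a" using gen_sub[OF U P_sg[OF idem]] mult by blast+
    have h: "(a * x) * (a * y) \<in> H_of a" using mult phi_hom[OF idem xP] by metis
    obtain g where g: "g \<in> H_of a" "((a * x) * (a * y)) * g = a" "g * ((a * x) * (a * y)) = a"
      using H_inv[OF idem h] by blast
    have gW: "g \<in> aSa_of a" using g H_W[OF idem] by blast
    have axW: "a * x \<in> aSa_of a" and ayW: "a * y \<in> aSa_of a" using phi_W[OF idem] xP yP by auto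
    have "a * x \<in> H_of a"
      using unitR[OF axW W_mult[OF idem ayW gW]] g by (metis mult.assoc)
    moreover have "a * y \<in> H_of a"
      using unitL[OF ayW W_mult[OF idem gW axW]] g by (metis mult.assoc)
    ultimately show ?case using mult sgp_gen.mult by blast
  qed
qed

lemma first_letter: "V \<subseteq> Rhat_of a \<Longrightarrow> x \<in> sgp_gen V \<Longrightarrow> \<exists>u\<in>V. greenR (P_of a) u x"
proof -
  assume V: "V \<subseteq> Rhat_of a" and x: "x \<in> sgp_gen V"
  from x show ?thesis
  proof (induction rule: sgp_gen.induct)
    case (base u)
    then have "u \<in> P_of a" using Rhat_iff V by blast
    then show ?case using base unfolding greenR_def by blast
  next
    case (mult x y)
    have xP: "x \<in> P_of a" and yR: "y \<in> Rhat_of a"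
      using gen_sub[OF V Rhat_sg] mult Rhat_iff by blast+
    have "greenR (P_of a) x (x * y)" using R_mult xP yR by blast
    then show ?case using mult unfolding greenR_def by metis
  qed
qed


lemma upper_gen:
  assumes RI: "RI_dominated (P_of a)"
    and VW: "VW \<subseteq> aSa_of a" "sgp_gen (H_of a \<union> VW) = aSa_of a"
    and XH: "XH \<subseteq> H_of a" "sgp_gen XH = H_of a"
    and E: "\<forall>C\<in>RP_classes_in_Rhat a. E C \<in> C \<and> a * E C = a"
    and k0: "k0 \<in> K" "E (\<alpha> k0) = a"
    and al: "\<alpha> ` K = RP_classes_in_Rhat a" and be: "\<beta> ` K = XH"
  shows "sgp_gen (VW \<union> (\<lambda>k. E (\<alpha> k) * \<beta> k) ` K) = P_of a"
proof -
  let ?G = "VW \<union> (\<lambda>k. E (\<alpha> k) * \<beta> k) ` K"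
  let ?g = "sgp_gen ?G"
  have EP: "\<And>C. C \<in> RP_classes_in_Rhat a \<Longrightarrow> E C \<in> P_of a"
  proof -
    fix C assume C: "C \<in> RP_classes_in_Rhat a"
    then have "C \<subseteq> Rhat_of a" unfolding RP_classes_in_Rhat_def by blast
    then show "E C \<in> P_of a" using E C Rhat_iff by blast
  qed
  have betaH: "\<And>k. k \<in> K \<Longrightarrow> \<beta> k \<in> H_of a" using be XH(1) by blast
  have alC: "\<And>k. k \<in> K \<Longrightarrow> \<alpha> k \<in> RP_classes_in_Rhat a" using al by blast
  have zG: "\<And>k. k \<in> K \<Longrightarrow> E (\<alpha> k) * \<beta> k \<in> ?g"
    by (rule sgp_gen.base, rule UnI2, rule imageI)
  have GP: "?G \<subseteq> P_of a"
  proof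
    fix z assume "z \<in> ?G"
    then show "z \<in> P_of a"
    proof
      assume "z \<in> VW" then show ?thesis using VW(1) W_P[OF idem] by blast
    next
      assume "z \<in> (\<lambda>k. E (\<alpha> k) * \<beta> k) ` K"
      then obtain k where "k \<in> K" "z = E (\<alpha> k) * \<beta> k" by blast
      then show ?thesis using P_mult[OF idem] EP alC betaH H_P[OF idem] by blast
    qed
  qed
  have sub: "?g \<subseteq> P_of a" using gen_sub[OF GP P_sg[OF idem]] .
  have step: "\<And>w. w \<in> sgp_gen XH \<Longrightarrow> \<forall>g. g \<in> ?g \<and> g \<in> aSa_of a \<longrightarrow> g * w \<in> ?g"
  proof -
    fix w assume "w \<in> sgp_gen XH"
    then show "\<forall>g. g \<in> ?g \<and> g \<in> aSa_of a \<longrightarrow> g * w \<in> ?g"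
    proof (induction rule: sgp_gen.induct)
      case (base x)
      then obtain k where k: "k \<in> K" "x = \<beta> k" using be by blast
      show ?case
      proof (intro allI impI)
        fix g assume g: "g \<in> ?g \<and> g \<in> aSa_of a"
        have ga: "g * a = g" using W_ra[OF idem] g by blast
        have gaz: "\<And>z. g * (a * z) = g * z" using ga by (simp add: mult.assoc[symmetric])
        have aE: "a * E (\<alpha> k) = a" using E alC[OF k(1)] by blast
        have "a * (E (\<alpha> k) * x) = a * x" using aE by (simp add: mult.assoc[symmetric])
        then have "g * (a * (E (\<alpha> k) * x)) = g * (a * x)" by simp
        then have eq: "g * (E (\<alpha> k) * x) = g * x" using gaz by simp
        have "g * (E (\<alpha> k) * x) \<in> ?g" using sgp_gen.mult g zG[OF k(1)] k(2) by blast
        then show "g * x \<in> ?g" using eq by simp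
      qed
    next
      case (mult x y)
      show ?case
      proof (intro allI impI)
        fix g assume g: "g \<in> ?g \<and> g \<in> aSa_of a"
        have xW: "x \<in> aSa_of a" using mult.hyps(1) XH(2) H_W[OF idem] by blast
        have gx: "g * x \<in> ?g \<and> g * x \<in> aSa_of a" using mult.IH(1) g W_mult[OF idem] xW by blast
        have "(g * x) * y \<in> ?g" using mult.IH(2) gx by blast
        then show "g * (x * y) \<in> ?g" by (simp add: mult.assoc)
      qed
    qed
  qed
  define y0 where "y0 = \<beta> k0"
  have y0H: "y0 \<in> H_of a" using betaH k0(1) y0_def by blast
  have "E (\<alpha> k0) * \<beta> k0 = y0" using k0(2) W_la[OF idem] H_W[OF idem] y0H y0_def by auto
  then have y0g: "y0 \<in> ?g" using zG[OF k0(1)] by simp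
  have Hg: "H_of a \<subseteq> ?g"
  proof
    fix t assume t: "t \<in> H_of a"
    obtain y' where y': "y' \<in> H_of a" "y0 * y' = a" using H_inv[OF idem y0H] by blast
    have "y' * t \<in> sgp_gen XH" using H_mult y' t XH(2) by blast
    then have "y0 * (y' * t) \<in> ?g" using step y0g y0H H_W[OF idem] by blast
    moreover have "y0 * (y' * t) = t" using y'(2) W_la[OF idem] t H_W[OF idem]
      by (auto simp: mult.assoc[symmetric])
    ultimately show "t \<in> ?g" by simp
  qed
  have Wg: "aSa_of a \<subseteq> ?g"
  proof -
    have "H_of a \<union> VW \<subseteq> ?g" using Hg sgp_gen.base by blast
    then show ?thesis using gen_sub[OF _ gen_subsg] VW(2) by metis
  qed
  have "P_of a \<subseteq> ?g"
  proof
    fix p assume p: "p \<in> P_of a"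
    obtain e where e: "right_identity (P_of a) e" "p \<in> rideal1 (P_of a) e"
      using RI p unfolding RI_dominated_def by blast
    have eP: "e \<in> P_of a" using e(1) unfolding right_identity_def by blast
    have ae: "a * e = a" using e(1) W_P[OF idem] a_W[OF idem] unfolding right_identity_def by blast
    have eR: "e \<in> Rhat_of a" using Rhat_iff eP ae a_H[OF idem] by simp
    define C where "C = {y. greenR (P_of a) e y}"
    have C: "C \<in> RP_classes_in_Rhat a"
      unfolding RP_classes_in_Rhat_def C_def using eP class_sub[OF eR] by blast
    have EC: "E C \<in> C" using E C by blast
    then have "e \<in> rideal1 (P_of a) (E C)" unfolding C_def greenR_P_iff by blast
    then have pE: "p \<in> rideal1 (P_of a) (E C)" using rideal_trans[OF P_sg[OF idem]] e(2) by blast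
    have ECP: "E C \<in> P_of a" using EP C by blast
    obtain w where w: "w \<in> aSa_of a" "p = E C * w"
    proof (cases "p = E C")
      case True
      then show ?thesis using that[of a] a_W[OF idem] P_ra[OF idem ECP] by simp
    next
      case False
      then obtain q where q: "q \<in> P_of a" "p = E C * q" using pE unfolding rideal1_def by blast
      have "E C * (a * q) = E C * q" using P_ra[OF idem ECP] by (simp add: mult.assoc[symmetric])
      then show ?thesis using that[of "a * q"] phi_W[OF idem q(1)] q(2) by simp
    qed
    obtain k where k: "k \<in> K" "\<alpha> k = C" using al C by (metis imageE)
    define x where "x = \<beta> k"
    have xH: "x \<in> H_of a" using betaH k(1) x_def by blast
    obtain x' where x': "x' \<in> H_of a" "x * x' = a" using H_inv[OF idem xH] by blast
    have z: "E C * x \<in> ?g" using zG[OF k(1)] k(2) x_def by simp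
    have "x' * w \<in> aSa_of a" using W_mult[OF idem] x' H_W[OF idem] w(1) by blast
    then have "(E C * x) * (x' * w) \<in> ?g" using z Wg sgp_gen.mult by blast
    moreover have "(E C * x) * (x' * w) = p"
    proof -
      have "(E C * x) * (x' * w) = E C * (x * x') * w" by (simp add: mult.assoc)
      also have "\<dots> = E C * a * w" using x'(2) by simp
      also have "\<dots> = p" using P_ra[OF idem ECP] w(2) by simp
      finally show ?thesis .
    qed
    ultimately show "p \<in> ?g" by simp
  qed
  then show ?thesis using sub by blast
qed

lemma upper_card:
  assumes RI: "RI_dominated (P_of a)"
    and VW: "VW \<subseteq> aSa_of a" "sgp_gen (H_of a \<union> VW) = aSa_of a"
    and XH: "XH \<subseteq> H_of a" "sgp_gen XH = H_of a"
    and E: "\<forall>C\<in>RP_classes_in_Rhat a. E C \<in> C \<and> a * E C = a"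
    and k0: "k0 \<in> K" "E (\<alpha> k0) = a"
    and al: "\<alpha> ` K = RP_classes_in_Rhat a" and be: "\<beta> ` K = XH"
    and UPmin: "\<forall>V. V \<subseteq> P_of a \<and> sgp_gen V = P_of a \<longrightarrow> ordLeq3 (card_of UP) (card_of V)"
  shows "ordLeq3 (card_of UP) (BNF_Cardinal_Arithmetic.csum (card_of VW) (card_of K))"
proof -
  let ?Z = "(\<lambda>k. E (\<alpha> k) * \<beta> k) ` K"
  have g: "sgp_gen (VW \<union> ?Z) = P_of a" using upper_gen[OF assms(1-10)] .
  have s: "VW \<union> ?Z \<subseteq> P_of a" using gen_base[of "VW \<union> ?Z"] g by simp
  have 1: "ordLeq3 (card_of UP) (card_of (VW \<union> ?Z))" using spec[OF UPmin, of "VW \<union> ?Z"] s g by simp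
  have 2: "ordLeq3 (card_of (VW \<union> ?Z)) (BNF_Cardinal_Arithmetic.csum (card_of VW) (card_of ?Z))" by (rule Un_csum)
  have 3: "ordLeq3 (BNF_Cardinal_Arithmetic.csum (card_of VW) (card_of ?Z)) (BNF_Cardinal_Arithmetic.csum (card_of VW) (card_of K))"
    by (rule csum_mono2[OF card_of_image])
  show ?thesis by (rule ordLeq_transitive[OF ordLeq_transitive[OF 1 2] 3])
qed
end

theorem theorem3p27:
  fixes a :: "'a::semigroup_mult"
  assumes idem: "a * a = a"
      and reg: "aSa_of a \<subseteq> Reg"
      and ideal: "ideal_of (aSa_of a) (aSa_of a - H_of a)"
  shows "csum_max_leq (relrank (aSa_of a) (H_of a))
           (card_of (RP_classes_in_Rhat a)) (srank (H_of a)) (srank (P_of a))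
         \<and> (RI_dominated (P_of a) \<longrightarrow>
            csum_max_iso (relrank (aSa_of a) (H_of a))
              (card_of (RP_classes_in_Rhat a)) (srank (H_of a)) (srank (P_of a)))"
proof -
  let ?W = "aSa_of a" and ?H = "H_of a" and ?P = "P_of a" and ?cls = "RP_classes_in_Rhat a"
  have exP: "\<exists>U. U \<subseteq> ?P \<and> sgp_gen U = ?P \<and>
      (\<forall>V. V \<subseteq> ?P \<and> sgp_gen V = ?P \<longrightarrow> ordLeq3 (card_of U) (card_of V))"
    using min_exists[of "\<lambda>U. U \<subseteq> ?P \<and> sgp_gen U = ?P" ?P] gen_self[OF P_sg[OF idem]] by simp
  define UP where "UP = (SOME U. U \<subseteq> ?P \<and> sgp_gen U = ?P \<and>
      (\<forall>V. V \<subseteq> ?P \<and> sgp_gen V = ?P \<longrightarrow> ordLeq3 (card_of U) (card_of V)))"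
  have UP: "UP \<subseteq> ?P" "sgp_gen UP = ?P"
    "\<forall>V. V \<subseteq> ?P \<and> sgp_gen V = ?P \<longrightarrow> ordLeq3 (card_of UP) (card_of V)"
    using someI_ex[OF exP] unfolding UP_def by blast+
  have sP: "srank ?P = card_of UP" unfolding srank_def UP_def by simp
  have exH: "\<exists>U. U \<subseteq> ?H \<and> sgp_gen U = ?H \<and>
      (\<forall>V. V \<subseteq> ?H \<and> sgp_gen V = ?H \<longrightarrow> ordLeq3 (card_of U) (card_of V))"
    using min_exists[of "\<lambda>U. U \<subseteq> ?H \<and> sgp_gen U = ?H" ?H] gen_self[OF H_sg[OF idem ideal]] by simp
  define XH where "XH = (SOME U. U \<subseteq> ?H \<and> sgp_gen U = ?H \<and>
      (\<forall>V. V \<subseteq> ?H \<and> sgp_gen V = ?H \<longrightarrow> ordLeq3 (card_of U) (card_of V)))"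
  have XH: "XH \<subseteq> ?H" "sgp_gen XH = ?H"
    "\<forall>V. V \<subseteq> ?H \<and> sgp_gen V = ?H \<longrightarrow> ordLeq3 (card_of XH) (card_of V)"
    using someI_ex[OF exH] unfolding XH_def by blast+
  have sH: "srank ?H = card_of XH" unfolding srank_def XH_def by simp
  have gW: "sgp_gen (?H \<union> ?W) = ?W"
    using gen_self[OF W_sg[OF idem]] H_W[OF idem] by (simp add: Un_absorb1)
  have exW: "\<exists>U. U \<subseteq> ?W \<and> sgp_gen (?H \<union> U) = ?W \<and>
      (\<forall>V. V \<subseteq> ?W \<and> sgp_gen (?H \<union> V) = ?W \<longrightarrow> ordLeq3 (card_of U) (card_of V))"
    using min_exists[of "\<lambda>U. U \<subseteq> ?W \<and> sgp_gen (?H \<union> U) = ?W" ?W] gW by simp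
  define VW where "VW = (SOME U. U \<subseteq> ?W \<and> sgp_gen (?H \<union> U) = ?W \<and>
      (\<forall>V. V \<subseteq> ?W \<and> sgp_gen (?H \<union> V) = ?W \<longrightarrow> ordLeq3 (card_of U) (card_of V)))"
  have VW: "VW \<subseteq> ?W" "sgp_gen (?H \<union> VW) = ?W"
    "\<forall>V. V \<subseteq> ?W \<and> sgp_gen (?H \<union> V) = ?W \<longrightarrow> ordLeq3 (card_of VW) (card_of V)"
    using someI_ex[OF exW] unfolding VW_def by blast+
  have sW: "relrank ?W ?H = card_of VW" unfolding relrank_def VW_def by simp

  define U1 where "U1 = UP - Rhat_of a"
  define U2 where "U2 = UP \<inter> Rhat_of a"
  have U2P: "U2 \<subseteq> ?P" using UP(1) U2_def by blast
  have L1: "ordLeq3 (card_of VW) (card_of U1)"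
  proof -
    let ?V = "(\<lambda>u. a * u) ` U1"
    have VsW: "?V \<subseteq> ?W" using phi_W[OF idem] UP(1) U1_def by blast
    have "?H \<union> ?V \<subseteq> ?W" using VsW H_W[OF idem] by blast
    then have "sgp_gen (?H \<union> ?V) \<subseteq> ?W" using gen_sub[OF _ W_sg[OF idem]] by blast
    moreover have "?W \<subseteq> sgp_gen (?H \<union> ?V)"
    proof
      fix w assume w: "w \<in> ?W"
      then have "w \<in> sgp_gen UP" using UP(2) W_P[OF idem] by blast
      then have "a * w \<in> sgp_gen (?H \<union> ?V)" using phi_gen[OF idem ideal UP(1)] U1_def by blast
      then show "w \<in> sgp_gen (?H \<union> ?V)" using W_la[OF idem w] by simp
    qed
    ultimately have "sgp_gen (?H \<union> ?V) = ?W" by blast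
    then have "ordLeq3 (card_of VW) (card_of ?V)" using VW(3) VsW by blast
    then show ?thesis using card_of_image ordLeq_transitive by blast
  qed
  have L2: "ordLeq3 (card_of XH) (card_of U2)"
  proof -
    let ?V = "(\<lambda>u. a * u) ` U2"
    have VsH: "?V \<subseteq> ?H" using Rhat_iff[OF idem ideal] U2_def by blast
    have "sgp_gen ?V \<subseteq> ?H" using gen_sub[OF VsH H_sg[OF idem ideal]] .
    moreover have "?H \<subseteq> sgp_gen ?V"
    proof
      fix h assume h: "h \<in> ?H"
      have hW: "h \<in> ?W" using h H_W[OF idem] by blast
      then have "h \<in> sgp_gen UP" using UP(2) W_P[OF idem] by blast
      moreover have "a * h \<in> ?H" using h W_la[OF idem hW] by simp
      ultimately have "h \<in> sgp_gen U2" using gen_U2[OF idem ideal UP(1)] U2_def by blast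
      then have "a * h \<in> sgp_gen ?V" using phi_gen2[OF idem ideal U2P] by blast
      then show "h \<in> sgp_gen ?V" using W_la[OF idem hW] by simp
    qed
    ultimately have "sgp_gen ?V = ?H" by blast
    then have "ordLeq3 (card_of XH) (card_of ?V)" using XH(3) VsH by blast
    then show ?thesis using card_of_image ordLeq_transitive by blast
  qed
  have L3: "ordLeq3 (card_of ?cls) (card_of U2)"
  proof -
    have ex: "\<forall>C\<in>?cls. \<exists>u. u \<in> U2 \<and> u \<in> C"
    proof
      fix C assume C: "C \<in> ?cls"
      then obtain x where x: "x \<in> ?P" and Cx: "C = {y. greenR ?P x y}" and sub: "C \<subseteq> Rhat_of a"
        unfolding RP_classes_in_Rhat_def by blast
      have "x \<in> C" using Cx x unfolding greenR_def by simp
      then have xR: "x \<in> Rhat_of a" using sub by blast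
      have "x \<in> sgp_gen UP" using UP(2) x by simp
      moreover have "a * x \<in> ?H" using xR Rhat_iff[OF idem ideal] by blast
      ultimately have "x \<in> sgp_gen U2"
        using gen_U2[OF idem ideal UP(1)] U2_def by blast
      moreover have "U2 \<subseteq> Rhat_of a" using U2_def by blast
      ultimately obtain u where u: "u \<in> U2" "greenR ?P u x"
        using first_letter[OF idem ideal] by blast
      then have "greenR ?P x u" unfolding greenR_def by auto
      then show "\<exists>u. u \<in> U2 \<and> u \<in> C" using u Cx by blast
    qed
    define f where "f = (\<lambda>C. SOME u. u \<in> U2 \<and> u \<in> C)"
    have f: "\<And>C. C \<in> ?cls \<Longrightarrow> f C \<in> U2 \<and> f C \<in> C"
    proof -
      fix C assume "C \<in> ?cls"
      then have "\<exists>u. u \<in> U2 \<and> u \<in> C" using ex by blast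
      then show "f C \<in> U2 \<and> f C \<in> C" unfolding f_def by (rule someI_ex)
    qed
    have "inj_on f ?cls"
    proof (rule inj_onI)
      fix C1 C2 assume C1: "C1 \<in> ?cls" and C2: "C2 \<in> ?cls" and eq: "f C1 = f C2"
      obtain x1 where x1: "C1 = {y. greenR ?P x1 y}" using C1 unfolding RP_classes_in_Rhat_def by blast
      obtain x2 where x2: "C2 = {y. greenR ?P x2 y}" using C2 unfolding RP_classes_in_Rhat_def by blast
      have "f C1 \<in> C1" "f C1 \<in> C2" using f[OF C1] f[OF C2] eq by auto
      then have "greenR ?P x1 (f C1)" "greenR ?P x2 (f C1)" using x1 x2 by auto
      then show "C1 = C2" unfolding x1 x2 greenR_def by auto
    qed
    moreover have "f ` ?cls \<subseteq> U2" using f by blast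
    ultimately show ?thesis using card_of_ordLeq by blast
  qed
  have L4: "ordLeq3 (BNF_Cardinal_Arithmetic.csum (card_of U1) (card_of U2)) (card_of UP)"
  proof -
    have "bij_betw (\<lambda>c. if c \<in> U1 then Inl c else Inr c) UP (U1 <+> U2)"
      unfolding bij_betw_def inj_on_def U1_def U2_def by auto
    then have "ordIso2 (card_of UP) (card_of (U1 <+> U2))" using card_of_ordIso by blast
    then have "ordIso2 (card_of UP) (BNF_Cardinal_Arithmetic.csum (card_of U1) (card_of U2))"
      using Plus_csum ordIso_transitive by blast
    then show ?thesis using ordIso_iff_ordLeq by blast
  qed
  have lowH: "ordLeq3 (BNF_Cardinal_Arithmetic.csum (relrank ?W ?H) (srank ?H)) (srank ?P)"
    unfolding sW sH sP using ordLeq_transitive[OF csum_mono[OF L1 L2] L4] .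
  have lowC: "ordLeq3 (BNF_Cardinal_Arithmetic.csum (relrank ?W ?H) (card_of ?cls)) (srank ?P)"
    unfolding sW sP using ordLeq_transitive[OF csum_mono[OF L1 L3] L4] .
  have part1: "csum_max_leq (relrank ?W ?H) (card_of ?cls) (srank ?H) (srank ?P)"
    unfolding csum_max_leq_def using lowH lowC by simp

  have part2: "csum_max_iso (relrank ?W ?H) (card_of ?cls) (srank ?H) (srank ?P)"
    if RI: "RI_dominated ?P"
  proof -
    define C0 where "C0 = {y. greenR ?P a y}"
    have aP: "a \<in> ?P" using a_W[OF idem] W_P[OF idem] by blast
    have aR: "a \<in> Rhat_of a" using Rhat_iff[OF idem ideal] aP a_H[OF idem] idem by simp
    have C0: "C0 \<in> ?cls" unfolding RP_classes_in_Rhat_def C0_def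
      using aP class_sub[OF idem ideal aR] by blast
    have aC0: "a \<in> C0" unfolding C0_def greenR_def using aP by simp
    define E where "E = (\<lambda>C. if C = C0 then a else SOME e. e \<in> C \<and> a * e = a)"
    have E: "\<forall>C\<in>?cls. E C \<in> C \<and> a * E C = a"
    proof
      fix C assume C: "C \<in> ?cls"
      show "E C \<in> C \<and> a * E C = a"
      proof (cases "C = C0")
        case True then show ?thesis unfolding E_def using aC0 idem by simp
      next
        case False
        have "\<exists>e. e \<in> C \<and> a * e = a" using class_has_E[OF idem ideal C] by blast
        then have "(SOME e. e \<in> C \<and> a * e = a) \<in> C \<and> a * (SOME e. e \<in> C \<and> a * e = a) = a"
          by (rule someI_ex)
        then show ?thesis unfolding E_def using False by simp
      qed
    qed
    have EC0: "E C0 = a" unfolding E_def by simp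
    have clsne: "?cls \<noteq> {}" using C0 by blast
    have XHne: "XH \<noteq> {}" using XH(2) a_H[OF idem] gen_empty by auto
    show ?thesis
    proof (cases "ordLeq3 (card_of ?cls) (srank ?H)")
      case True
      then have "ordLeq3 (card_of ?cls) (card_of XH)" using sH by simp
      then have "\<exists>g. g ` XH = ?cls" by (rule card_of_ordLeq2[OF clsne, THEN iffD2])
      then obtain \<alpha> where al: "\<alpha> ` XH = ?cls" by blast
      have "C0 \<in> \<alpha> ` XH" using C0 al by simp
      then obtain k0 where k0: "k0 \<in> XH" "\<alpha> k0 = C0" by blast
      have "E (\<alpha> k0) = a" using k0 EC0 by simp
      from upper_card[OF idem ideal RI VW(1,2) XH(1,2) E k0(1) this al _ UP(3), of id]
      have "ordLeq3 (card_of UP) (BNF_Cardinal_Arithmetic.csum (card_of VW) (card_of XH))"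
        by simp
      then have "ordLeq3 (srank ?P) (BNF_Cardinal_Arithmetic.csum (relrank ?W ?H) (srank ?H))"
        unfolding sP sW sH .
      then have "ordIso2 (srank ?P) (BNF_Cardinal_Arithmetic.csum (relrank ?W ?H) (srank ?H))"
        by (rule ordIso_iff_ordLeq[THEN iffD2, OF conjI[OF _ lowH]])
      then show ?thesis unfolding csum_max_iso_def using True by simp
    next
      case False
      then have "\<not> ordLeq3 (card_of ?cls) (card_of XH)" using sH by simp
      then have "ordLess2 (card_of XH) (card_of ?cls)"
        using not_ordLeq_iff_ordLess[OF card_of_Well_order card_of_Well_order] by blast
      then have "ordLeq3 (card_of XH) (card_of ?cls)" using ordLess_imp_ordLeq by blast
      then have "\<exists>g. g ` ?cls = XH" by (rule card_of_ordLeq2[OF XHne, THEN iffD2])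
      then obtain \<beta> where be: "\<beta> ` ?cls = XH" by blast
      from upper_card[OF idem ideal RI VW(1,2) XH(1,2) E C0 _ _ be UP(3), of id]
      have "ordLeq3 (card_of UP) (BNF_Cardinal_Arithmetic.csum (card_of VW) (card_of ?cls))"
        using EC0 by simp
      then have "ordLeq3 (srank ?P) (BNF_Cardinal_Arithmetic.csum (relrank ?W ?H) (card_of ?cls))"
        unfolding sP sW .
      then have "ordIso2 (srank ?P) (BNF_Cardinal_Arithmetic.csum (relrank ?W ?H) (card_of ?cls))"
        by (rule ordIso_iff_ordLeq[THEN iffD2, OF conjI[OF _ lowC]])
      then show ?thesis unfolding csum_max_iso_def using False by simp
    qed
  qed
  show ?thesis using part1 part2 by blast
qed

end
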